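(* Let $f:\mathcal C_n\to\mathbb R$ with $\mathrm{Lip}(f)=L$, and let $h:\mathbb R\to\mathbb R$ be twice differentiable with $|h''(x)|<B$ for all $x$. Then: (1) for every $y\in\mathcal C_n$, $$\|\nabla(h\circ f)(y)-h'(f(y))\nabla f(y)\|_1\le BL^2n\quad\text{and}\quad\|\nabla(h\circ f)(y)-h'(f(y))\nabla f(y)\|_2\le BL^2\sqrt n;$$ (2) for every $x\in[-1,1]^n$, $$\|\nabla(h\circ f)(x)-h'(f(x))\nabla f(x)\|_1\le2BL^2n^{3/2},$$ where $f(x)$, $\nabla f(x)$ and $\nabla(h\circ f)(x)$ denote the harmonic extensions.
   Context: Notation. $\mathcal C_n=\{-1,1\}^n$. Discrete calculus. $\partial_ig(y)=\tfrac12\big(g(y^{i\to1})-g(y^{i\to-1})\big)$, where $y^{i\to\pm1}$ is $y$ with its $i$-th coordinate set to $\pm1$. $\nabla g=(\partial_1g,\dots,\partial_ng)$ and $\mathrm{Lip}(g)=\max_{i,y}|\partial_ig(y)|$. Harmonic extension. Any $g:\mathcal C_n\to\mathbb R$, including each $\partial_ig$, is extended to $[-1,1]^n$ by its unique multilinear polynomial $\sum_{S}\hat g(S)\prod_{i\in S}x_i$. *)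

theory Defs
  imports "HOL-Analysis.Analysis"
begin

definition cube :: "(real ^ 'n) set" where
  "cube = {y. \<forall>i. y $ i = 1 \<or> y $ i = -1}"

definition setc :: "real ^ 'n \<Rightarrow> 'n \<Rightarrow> real \<Rightarrow> real ^ 'n" where
  "setc y i b = (\<chi> j. if j = i then b else y $ j)"

definition dpart :: "'n \<Rightarrow> (real ^ 'n \<Rightarrow> real) \<Rightarrow> real ^ 'n \<Rightarrow> real" where
  "dpart i g y = (g (setc y i 1) - g (setc y i (-1))) / 2"

definition Lip :: "(real ^ ('n::finite) \<Rightarrow> real) \<Rightarrow> real" where
  "Lip g = Max {\<bar>dpart i g y\<bar> | i y. y \<in> cube}"

definition fcoef :: "(real ^ ('n::finite) \<Rightarrow> real) \<Rightarrow> 'n set \<Rightarrow> real" where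
  "fcoef g S = (\<Sum>y\<in>cube. g y * (\<Prod>i\<in>S. y $ i)) / 2 ^ CARD('n)"

definition hext :: "(real ^ ('n::finite) \<Rightarrow> real) \<Rightarrow> real ^ 'n \<Rightarrow> real" where
  "hext g x = (\<Sum>S\<in>Pow (UNIV::'n set). fcoef g S * (\<Prod>i\<in>S. x $ i))"

end

theory Submission
  imports Defs
begin

definition pw :: "real^'n \<Rightarrow> 'n \<Rightarrow> real \<Rightarrow> real" where "pw x i t = (1 + x$i*t)/2"
definition upd :: "real^'n \<Rightarrow> ('n \<Rightarrow> real) \<Rightarrow> 'n set \<Rightarrow> real^'n" where
  "upd y s K = (\<chi> j. if j \<in> K then s j else y$j)"
definition Av :: "real^'n \<Rightarrow> 'n set \<Rightarrow> (real^'n \<Rightarrow> real) \<Rightarrow> real^'n \<Rightarrow> real" where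
  "Av x K g y = (\<Sum>s\<in>PiE K (\<lambda>_. {-1,1::real}). (\<Prod>i\<in>K. pw x i (s i)) * g (upd y s K))"
definition A1 :: "real^'n \<Rightarrow> 'n \<Rightarrow> (real^'n \<Rightarrow> real) \<Rightarrow> real^'n \<Rightarrow> real" where
  "A1 x k g y = pw x k 1 * g (setc y k 1) + pw x k (-1) * g (setc y k (-1))"
definition EE :: "real^('n::finite) \<Rightarrow> (real^'n \<Rightarrow> real) \<Rightarrow> real" where
  "EE x g = Av x UNIV g 0"

lemma setc_setc[simp]: "setc (setc y k t) k t' = setc y k t'"
  by (simp add: setc_def vec_eq_iff)
lemma pw_sum: "pw x k 1 + pw x k (-1) = 1" by (simp add: pw_def field_simps)
lemma pw_nonneg: "\<bar>x$k\<bar> \<le> 1 \<Longrightarrow> t \<in> {-1,1} \<Longrightarrow> 0 \<le> pw x k t" by (auto simp: pw_def abs_le_iff)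

lemma Av_insert_sum:
  fixes K :: "'n::finite set"
  assumes "k \<notin> K"
  shows "Av x (insert k K) g y = (\<Sum>t\<in>{-1,1::real}. \<Sum>s\<in>PiE K (\<lambda>_. {-1,1::real}).
     pw x k t * (\<Prod>i\<in>K. pw x i (s i)) * g (upd y (s(k:=t)) (insert k K)))"
proof -
  have "Av x (insert k K) g y = (\<Sum>p\<in>{-1,1::real} \<times> PiE K (\<lambda>_. {-1,1::real}).
     (\<lambda>s. (\<Prod>i\<in>insert k K. pw x i (s i)) * g (upd y s (insert k K))) ((\<lambda>(t, s). s(k := t)) p))"
    unfolding Av_def PiE_insert_eq
    by (subst sum.reindex[OF inj_combinator[OF assms]]) (simp add: comp_def)
  also have "\<dots> = (\<Sum>(t,s)\<in>{-1,1::real} \<times> PiE K (\<lambda>_. {-1,1::real}).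
     pw x k t * (\<Prod>i\<in>K. pw x i (s i)) * g (upd y (s(k:=t)) (insert k K)))"
  proof (intro sum.cong refl, clarify)
    fix t s assume "s \<in> PiE K (\<lambda>_. {-1,1::real})"
    have "(\<Prod>i\<in>K. pw x i ((s(k:=t)) i)) = (\<Prod>i\<in>K. pw x i (s i))"
      using assms by (intro prod.cong) auto
    then show "(\<Prod>i\<in>insert k K. pw x i ((s(k:=t)) i)) * g (upd y (s(k:=t)) (insert k K)) =
       pw x k t * (\<Prod>i\<in>K. pw x i (s i)) * g (upd y (s(k:=t)) (insert k K))"
      using assms by simp
  qed
  also have "\<dots> = (\<Sum>t\<in>{-1,1::real}. \<Sum>s\<in>PiE K (\<lambda>_. {-1,1::real}).
     pw x k t * (\<Prod>i\<in>K. pw x i (s i)) * g (upd y (s(k:=t)) (insert k K)))"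
    by (simp add: sum.cartesian_product)
  finally show ?thesis .
qed

lemma upd_ins1: "k \<notin> K \<Longrightarrow> upd y (s(k:=t)) (insert k K) = upd (setc y k t) s K"
  by (auto simp: upd_def setc_def vec_eq_iff)
lemma upd_ins2: "k \<notin> K \<Longrightarrow> upd y (s(k:=t)) (insert k K) = setc (upd y s K) k t"
  by (auto simp: upd_def setc_def vec_eq_iff)

lemma sum_pm1: "(\<Sum>t\<in>{-1,1::real}. F t) = F 1 + F (-1)"
  by (simp add: add.commute)

lemma Av_ins1:
  fixes K :: "'n::finite set"
  assumes "k \<notin> K"
  shows "Av x (insert k K) g y = A1 x k (Av x K g) y"
  apply (subst Av_insert_sum[OF assms])
  unfolding upd_ins1[OF assms] sum_pm1 A1_def Av_def
  by (simp add: sum_distrib_left mult.assoc)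

lemma Av_ins2:
  fixes K :: "'n::finite set"
  assumes "k \<notin> K"
  shows "Av x (insert k K) g y = Av x K (A1 x k g) y"
  apply (subst Av_insert_sum[OF assms])
  unfolding upd_ins2[OF assms] sum_pm1 A1_def Av_def
  by (simp add: sum_distrib_left sum.distrib algebra_simps)

lemma A1_idem: "A1 x k (A1 x k g) y = A1 x k g y"
proof -
  have "A1 x k (A1 x k g) y = (pw x k 1 + pw x k (-1)) * A1 x k g y"
    unfolding A1_def[of x k "A1 x k g"] by (simp add: A1_def algebra_simps)
  then show ?thesis by (simp add: pw_sum)
qed

lemma A1_idem': "A1 x k (A1 x k g) = A1 x k g"
  by (rule ext) (rule A1_idem)

lemma A1_inv: "A1 x k g (setc y k t) = A1 x k g y"
  by (simp add: A1_def)

lemma Av_UNIV_indep: "Av x UNIV g y = Av x UNIV g z"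
  by (simp add: Av_def upd_def)

lemma EE_Av: "Av x UNIV g y = EE x g"
  by (simp add: EE_def Av_UNIV_indep[of x g y 0])

lemma EE_A1: "EE x (A1 x k g) = EE x g"
proof -
  have U: "UNIV = insert k (UNIV - {k})" by auto
  have "EE x (A1 x k g) = Av x (UNIV - {k}) (A1 x k (A1 x k g)) 0"
    unfolding EE_def by (subst U, subst Av_ins2) auto
  also have "\<dots> = Av x (UNIV - {k}) (A1 x k g) 0"
    by (simp only: A1_idem')
  also have "\<dots> = EE x g"
    unfolding EE_def by (subst (2) U, subst Av_ins2) auto
  finally show ?thesis .
qed

lemma EE_add: "EE x (\<lambda>y. g y + h y) = EE x g + EE x h"
  by (simp add: EE_def Av_def algebra_simps sum.distrib)
lemma EE_cmult: "EE x (\<lambda>y. c * g y) = c * EE x g"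
  by (simp add: EE_def Av_def algebra_simps sum_distrib_left)
lemma EE_diff: "EE x (\<lambda>y. g y - h y) = EE x g - EE x h"
  by (simp add: EE_def Av_def algebra_simps sum_subtractf)

lemma EE_const: "EE x (\<lambda>y. c) = c"
proof -
  have "EE x (\<lambda>y. c) = c * (\<Sum>s\<in>PiE UNIV (\<lambda>_. {-1,1::real}). \<Prod>i\<in>UNIV. pw x i (s i))"
    by (simp add: EE_def Av_def sum_distrib_left algebra_simps)
  also have "(\<Sum>s\<in>PiE UNIV (\<lambda>_. {-1,1::real}). \<Prod>i\<in>UNIV. pw x i (s i)) = (\<Prod>i\<in>UNIV. \<Sum>t\<in>{-1,1::real}. pw x i t)"
    by (rule prod_sum_PiE[symmetric]) auto
  also have "\<dots> = 1" by (simp add: pw_sum add.commute)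
  finally show ?thesis by simp
qed

lemma upd_cube: "s \<in> PiE UNIV (\<lambda>_. {-1,1::real}) \<Longrightarrow> upd y s UNIV \<in> cube"
  by (auto simp: upd_def cube_def PiE_def Pi_def)

lemma EE_mono:
  fixes x :: "real^'n::finite"
  assumes x: "\<forall>i. \<bar>x$i\<bar> \<le> 1" and le: "\<And>y. y \<in> cube \<Longrightarrow> g y \<le> h y"
  shows "EE x g \<le> EE x h"
  unfolding EE_def Av_def
proof (intro sum_mono mult_left_mono)
  fix s assume s: "s \<in> PiE (UNIV::'n set) (\<lambda>_. {-1,1::real})"
  show "g (upd 0 s UNIV) \<le> h (upd 0 s UNIV)" using le upd_cube[OF s] .
  show "0 \<le> (\<Prod>i\<in>UNIV. pw x i (s i))"
    using s x by (intro prod_nonneg pw_nonneg) (auto simp: PiE_def)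
qed

lemma A1_jensen:
  assumes "\<bar>x$k\<bar> \<le> 1"
  shows "(A1 x k w y)^2 \<le> A1 x k (\<lambda>z. (w z)^2) y"
proof -
  define p where "p = pw x k 1"
  define q where "q = pw x k (-1)"
  have pq: "p + q = 1" "0 \<le> p" "0 \<le> q" using pw_sum[of x k] pw_nonneg[OF assms] by (auto simp: p_def q_def)
  have q: "q = 1 - p" using pq(1) by simp
  have id: "p * a^2 + q * b^2 - (p*a + q*b)^2 = p*q*(a - b)^2" for a b :: real
    unfolding q by (simp add: power2_eq_square algebra_simps)
  have "A1 x k (\<lambda>z. (w z)^2) y - (A1 x k w y)^2 = p*q*(w (setc y k 1) - w (setc y k (-1)))^2"
    unfolding A1_def p_def[symmetric] q_def[symmetric] by (rule id)
  moreover have "0 \<le> p*q*(w (setc y k 1) - w (setc y k (-1)))^2" using pq by simp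
  ultimately show ?thesis by simp
qed

lemma A1_mult_inv:
  assumes "\<And>y t. v (setc y k t) = v y"
  shows "A1 x k (\<lambda>z. u z * v z) y = v y * A1 x k u y"
  by (simp add: A1_def assms algebra_simps)

lemma Av_empty: "Av x {} g y = g y"
  by (simp add: Av_def upd_def)

lemma ES:
  fixes x :: "real^'n::finite" and K :: "'n set"
  assumes x: "\<forall>i. \<bar>x$i\<bar> \<le> 1"
  shows "EE x (\<lambda>y. (g y - Av x K g y)^2) \<le> (\<Sum>k\<in>K. EE x (\<lambda>y. (g y - A1 x k g y)^2))"
proof -
  have "finite K" by simp
  then show ?thesis
  proof (induction K rule: finite_induct)
    case empty
    then show ?case by (simp add: Av_empty EE_const)
  next
    case (insert k K)
    define w where "w = (\<lambda>y. g y - Av x K g y)"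
    define u where "u = (\<lambda>y. g y - A1 x k g y)"
    define v where "v = (\<lambda>y. A1 x k w y)"
    have split: "g y - Av x (insert k K) g y = u y + v y" for y
      unfolding Av_ins1[OF insert(2)] u_def v_def w_def A1_def by (simp add: algebra_simps)
    have vinv: "v (setc y k t) = v y" for y t unfolding v_def by (rule A1_inv)
    have A1u: "A1 x k u y = 0" for y
      unfolding u_def A1_def[of x k "\<lambda>y. g y - A1 x k g y"] using A1_idem[of x k g y]
      by (simp add: A1_def algebra_simps)
    have cross: "EE x (\<lambda>y. u y * v y) = 0"
    proof -
      have "EE x (\<lambda>y. u y * v y) = EE x (A1 x k (\<lambda>y. u y * v y))" by (rule EE_A1[symmetric])
      also have "A1 x k (\<lambda>y. u y * v y) = (\<lambda>y. 0)"
        by (rule ext) (simp add: A1_mult_inv[where v=v, OF vinv] A1u)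
      finally show ?thesis by (simp add: EE_const)
    qed
    have vsq: "EE x (\<lambda>y. (v y)^2) \<le> EE x (\<lambda>y. (w y)^2)"
    proof -
      have "EE x (\<lambda>y. (v y)^2) \<le> EE x (A1 x k (\<lambda>z. (w z)^2))"
        unfolding v_def by (rule EE_mono[OF x]) (rule A1_jensen, use x in auto)
      then show ?thesis by (simp add: EE_A1)
    qed
    have "EE x (\<lambda>y. (g y - Av x (insert k K) g y)^2) = EE x (\<lambda>y. (u y)^2 + 2 * (u y * v y) + (v y)^2)"
      unfolding split by (simp add: power2_eq_square algebra_simps)
    also have "\<dots> = EE x (\<lambda>y. (u y)^2) + 2 * EE x (\<lambda>y. u y * v y) + EE x (\<lambda>y. (v y)^2)"
      by (simp add: EE_add EE_cmult)
    also have "\<dots> \<le> EE x (\<lambda>y. (u y)^2) + (\<Sum>k\<in>K. EE x (\<lambda>y. (g y - A1 x k g y)^2))"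
      using cross vsq insert(3) unfolding w_def by simp
    also have "\<dots> = (\<Sum>k\<in>insert k K. EE x (\<lambda>y. (g y - A1 x k g y)^2))"
      using insert(1,2) unfolding u_def by simp
    finally show ?case .
  qed
qed

lemma cube_eq: "cube = (\<lambda>s. \<chi> i. s i) ` PiE (UNIV::'n::finite set) (\<lambda>_. {-1,1::real})"
proof (rule set_eqI iffI)+
  fix y :: "real^'n" assume "y \<in> cube"
  then have "(\<lambda>i. y$i) \<in> PiE UNIV (\<lambda>_. {-1,1::real})" by (auto simp: cube_def PiE_def Pi_def)
  then show "y \<in> (\<lambda>s. \<chi> i. s i) ` PiE (UNIV::'n::finite set) (\<lambda>_. {-1,1::real})"
    by (intro image_eqI[where x="\<lambda>i. y$i"]) auto
next
  fix y :: "real^'n" assume "y \<in> (\<lambda>s. \<chi> i. s i) ` PiE (UNIV::'n::finite set) (\<lambda>_. {-1,1::real})"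
  then show "y \<in> cube" by (auto simp: cube_def PiE_def Pi_def)
qed

lemma finite_cube: "finite (cube :: (real^'n::finite) set)"
  unfolding cube_eq by (intro finite_imageI finite_PiE) auto

lemma one_cube: "(\<chi> i. 1) \<in> cube" by (simp add: cube_def)

lemma Lip_ge:
  fixes f :: "real^'n::finite \<Rightarrow> real"
  assumes "y \<in> cube" shows "\<bar>dpart i f y\<bar> \<le> Lip f"
proof -
  have eq: "{\<bar>dpart i f y\<bar> | i y. y \<in> cube} = (\<lambda>(i,y). \<bar>dpart i f y\<bar>) ` (UNIV \<times> cube)" by auto
  show ?thesis unfolding Lip_def eq
    by (rule Max_ge) (use assms finite_cube in \<open>auto intro!: finite_imageI\<close>)
qed

lemma Lip_nonneg: "0 \<le> Lip (f :: real^'n::finite \<Rightarrow> real)"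
  using Lip_ge[OF one_cube, of undefined f] by linarith

lemma upd_UNIV: "upd y s UNIV = (\<chi> i. s i)" by (simp add: upd_def)

lemma hext_EE:
  fixes g :: "real^'n::finite \<Rightarrow> real"
  shows "hext g x = EE x g"
proof -
  have "hext g x = (\<Sum>S\<in>Pow UNIV. \<Sum>y\<in>cube. g y / 2 ^ CARD('n) * ((\<Prod>i\<in>S. y$i) * (\<Prod>i\<in>S. x$i)))"
    unfolding hext_def fcoef_def by (simp add: sum_divide_distrib sum_distrib_left sum_distrib_right mult_ac)
  also have "\<dots> = (\<Sum>y\<in>cube. g y / 2 ^ CARD('n) * (\<Sum>S\<in>Pow UNIV. \<Prod>i\<in>S. y$i * x$i))"
    by (subst sum.swap) (simp add: sum_distrib_left prod.distrib)
  also have "\<dots> = (\<Sum>y\<in>cube. g y * (\<Prod>i\<in>UNIV. pw x i (y$i)))"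
  proof (rule sum.cong[OF refl])
    fix y :: "real^'n"
    have "(\<Sum>S\<in>Pow UNIV. \<Prod>i\<in>S. y$i * x$i) = (\<Prod>i\<in>UNIV. y$i * x$i + 1)"
      by (subst prod_add) auto
    moreover have "(\<Prod>i\<in>UNIV. pw x i (y$i)) = (\<Prod>i\<in>UNIV. y$i * x$i + 1) / 2 ^ CARD('n)"
      unfolding pw_def by (simp add: prod_dividef algebra_simps)
    ultimately show "g y / 2 ^ CARD('n) * (\<Sum>S\<in>Pow UNIV. \<Prod>i\<in>S. y$i * x$i) = g y * (\<Prod>i\<in>UNIV. pw x i (y$i))"
      by simp
  qed
  also have "\<dots> = EE x g"
    unfolding EE_def Av_def upd_UNIV cube_eq
    by (subst sum.reindex) (auto simp: inj_on_def vec_eq_iff mult.commute)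
  finally show ?thesis .
qed

lemma taylor2:
  fixes h h' h'' :: "real \<Rightarrow> real"
  assumes d1: "\<And>t. (h has_real_derivative h' t) (at t)"
    and d2: "\<And>t. (h' has_real_derivative h'' t) (at t)"
    and bd: "\<And>t. \<bar>h'' t\<bar> \<le> B"
  shows "\<bar>h b - h a - h' a * (b - a)\<bar> \<le> B / 2 * (b - a)^2"
proof (cases "b = a")
  case True then show ?thesis by simp
next
  case False
  define diff where "diff = (\<lambda>m::nat. if m = 0 then h else if m = 1 then h' else h'')"
  have "\<exists>t. (if b < a then b < t \<and> t < a else a < t \<and> t < b) \<and>
    h b = (\<Sum>m<2. (diff m a / fact m) * (b - a)^m) + (diff 2 t / fact 2) * (b - a)^2"
    by (rule Taylor[where a="min a b" and b="max a b"])
       (use False d1 d2 in \<open>auto simp: diff_def less_2_cases_iff\<close>)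
  then obtain t where "h b = (\<Sum>m<2. (diff m a / fact m) * (b - a)^m) + (diff 2 t / fact 2) * (b - a)^2"
    by blast
  then have eq: "h b - h a - h' a * (b - a) = h'' t / 2 * (b - a)^2"
    by (simp add: diff_def numeral_2_eq_2)
  have "\<bar>h'' t / 2 * (b - a)^2\<bar> \<le> B / 2 * (b - a)^2"
    using bd[of t] by (simp add: abs_mult mult_right_mono)
  then show ?thesis unfolding eq .
qed

lemma lip1:
  fixes h' h'' :: "real \<Rightarrow> real"
  assumes d2: "\<And>t. (h' has_real_derivative h'' t) (at t)"
    and bd: "\<And>t. \<bar>h'' t\<bar> \<le> B"
  shows "\<bar>h' b - h' a\<bar> \<le> B * \<bar>b - a\<bar>"
proof (cases "b = a")
  case True then show ?thesis by simp
next
  case False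
  define diff where "diff = (\<lambda>m::nat. if m = 0 then h' else h'')"
  have "\<exists>t. (if b < a then b < t \<and> t < a else a < t \<and> t < b) \<and>
    h' b = (\<Sum>m<1. (diff m a / fact m) * (b - a)^m) + (diff 1 t / fact 1) * (b - a)^1"
    by (rule Taylor[where a="min a b" and b="max a b"])
       (use False d2 in \<open>auto simp: diff_def\<close>)
  then obtain t where "h' b = (\<Sum>m<1. (diff m a / fact m) * (b - a)^m) + (diff 1 t / fact 1) * (b - a)^1"
    by blast
  then have "h' b - h' a = h'' t * (b - a)" by (simp add: diff_def)
  then show ?thesis using bd[of t] by (simp add: abs_mult mult_right_mono)
qed

lemma setc_self: "y \<in> cube \<Longrightarrow> y$i = t \<Longrightarrow> setc y i t = y"
  by (auto simp: setc_def vec_eq_iff)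

lemma pt1:
  fixes f :: "real^'n::finite \<Rightarrow> real" and h h' h'' :: "real \<Rightarrow> real"
  assumes d1: "\<And>t. (h has_real_derivative h' t) (at t)"
    and d2: "\<And>t. (h' has_real_derivative h'' t) (at t)"
    and bd: "\<And>t. \<bar>h'' t\<bar> \<le> B"
    and y: "y \<in> cube" and L: "\<bar>dpart i f y\<bar> \<le> L"
  shows "\<bar>dpart i (h \<circ> f) y - h' (f y) * dpart i f y\<bar> \<le> B * L^2"
proof -
  define a where "a = f (setc y i 1)"
  define b where "b = f (setc y i (-1))"
  have B0: "0 \<le> B" using bd[of 0] by linarith
  have d: "dpart i f y = (a - b) / 2" by (simp add: dpart_def a_def b_def)
  have dh: "dpart i (h \<circ> f) y = (h a - h b) / 2" by (simp add: dpart_def a_def b_def)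
  have sq: "((a - b)/2)^2 \<le> L^2"
  proof -
    have "\<bar>(a - b)/2\<bar>^2 \<le> L^2" by (rule power_mono[OF L[unfolded d] abs_ge_zero])
    then show ?thesis by (simp only: power2_abs)
  qed
  have "\<bar>dpart i (h \<circ> f) y - h' (f y) * dpart i f y\<bar> \<le> B / 4 * (a - b)^2"
  proof (cases "y$i = 1")
    case True
    then have fy: "f y = a" using setc_self[OF y True] by (simp add: a_def)
    have T: "\<bar>h b - h a - h' a * (b - a)\<bar> \<le> B / 2 * (b - a)^2" by (rule taylor2[OF d1 d2 bd])
    have eq: "dpart i (h \<circ> f) y - h' (f y) * dpart i f y = - (h b - h a - h' a * (b - a)) / 2"
      unfolding d dh fy by (simp add: field_simps)
    then have "\<bar>dpart i (h \<circ> f) y - h' (f y) * dpart i f y\<bar> = \<bar>h b - h a - h' a * (b - a)\<bar> / 2"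
      unfolding eq abs_divide abs_minus_cancel by simp
    also have "\<dots> \<le> B / 4 * (a - b)^2" using T by (simp add: power2_commute)
    finally show ?thesis .
  next
    case False
    then have m1: "y$i = -1" using y by (auto simp: cube_def)
    have fy: "f y = b" using setc_self[OF y m1] by (simp add: b_def)
    have T: "\<bar>h a - h b - h' b * (a - b)\<bar> \<le> B / 2 * (a - b)^2" by (rule taylor2[OF d1 d2 bd])
    have eq: "dpart i (h \<circ> f) y - h' (f y) * dpart i f y = (h a - h b - h' b * (a - b)) / 2"
      unfolding d dh fy by (simp add: field_simps)
    then have "\<bar>dpart i (h \<circ> f) y - h' (f y) * dpart i f y\<bar> = \<bar>h a - h b - h' b * (a - b)\<bar> / 2"
      unfolding eq abs_divide abs_minus_cancel by simp
    also have "\<dots> \<le> B / 4 * (a - b)^2" using T by simp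
    finally show ?thesis .
  qed
  also have "\<dots> = B * ((a-b)/2)^2" by (simp add: power2_eq_square)
  also have "\<dots> \<le> B * L^2" by (rule mult_left_mono[OF sq B0])
  finally show ?thesis .
qed

lemma coord_var:
  fixes x :: "real^'n::finite" and f :: "real^'n \<Rightarrow> real"
  assumes x: "\<forall>i. \<bar>x$i\<bar> \<le> 1" and L: "\<And>y. y \<in> cube \<Longrightarrow> \<bar>dpart k f y\<bar> \<le> L"
  shows "EE x (\<lambda>y. (f y - A1 x k f y)^2) \<le> L^2"
proof -
  have "EE x (\<lambda>y. (f y - A1 x k f y)^2) = EE x (A1 x k (\<lambda>y. (f y - A1 x k f y)^2))"
    by (rule EE_A1[symmetric])
  also have "\<dots> \<le> EE x (\<lambda>y. L^2)"
  proof (rule EE_mono[OF x])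
    fix y :: "real^'n" assume y: "y \<in> cube"
    define a where "a = f (setc y k 1)"
    define b where "b = f (setc y k (-1))"
    define p where "p = pw x k 1"
    define q where "q = pw x k (-1)"
    have pq: "p + q = 1" "0 \<le> p" "0 \<le> q" using pw_sum[of x k] pw_nonneg[of x k] x by (auto simp: p_def q_def)
    have qq: "q = 1 - p" using pq(1) by simp
    have id: "p*(a - (p*a+q*b))^2 + q*(b - (p*a+q*b))^2 = p*q*(a-b)^2"
      unfolding qq by (simp add: power2_eq_square algebra_simps)
    have e: "A1 x k (\<lambda>y. (f y - A1 x k f y)^2) y = p*(a - (p*a+q*b))^2 + q*(b - (p*a+q*b))^2"
      by (simp add: A1_def a_def b_def p_def q_def)
    have h4: "p*q \<le> 1/4"
    proof -
      have "0 \<le> (p - 1/2)^2" by simp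
      then show ?thesis unfolding qq by (simp add: power2_eq_square algebra_simps)
    qed
    have d: "dpart k f y = (a - b)/2" by (simp add: dpart_def a_def b_def)
    have sq: "((a - b)/2)^2 \<le> L^2"
    proof -
      have "\<bar>(a - b)/2\<bar>^2 \<le> L^2" by (rule power_mono[OF L[OF y, unfolded d] abs_ge_zero])
      then show ?thesis by (simp only: power2_abs)
    qed
    have "p*q*(a-b)^2 \<le> 1/4 * (a-b)^2" by (rule mult_right_mono[OF h4]) simp
    also have "\<dots> = ((a - b)/2)^2" by (simp add: power2_eq_square)
    finally show "A1 x k (\<lambda>y. (f y - A1 x k f y)^2) y \<le> L^2" unfolding e id using sq by linarith
  qed
  also have "\<dots> = L^2" by (rule EE_const)
  finally show ?thesis .
qed

lemma EE_abs_le: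
  fixes x :: "real^'n::finite"
  assumes x: "\<forall>i. \<bar>x$i\<bar> \<le> 1" and le: "\<And>y. y \<in> cube \<Longrightarrow> \<bar>g y\<bar> \<le> h y"
  shows "\<bar>EE x g\<bar> \<le> EE x h"
proof -
  have "EE x g \<le> EE x h" by (rule EE_mono[OF x]) (use le in force)
  moreover have "EE x (\<lambda>y. (-1) * g y) \<le> EE x h" by (rule EE_mono[OF x]) (use le in force)
  moreover have "EE x (\<lambda>y. (-1) * g y) = - EE x g" using EE_cmult[of x "-1" g] by simp
  ultimately show ?thesis by linarith
qed

theorem mainTheorem10:
  fixes f :: "real ^ ('n::finite) \<Rightarrow> real"
    and h h' h'' :: "real \<Rightarrow> real" and L B :: real
  assumes "Lip f = L"
    and "\<And>t. (h has_real_derivative h' t) (at t)"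
    and "\<And>t. (h' has_real_derivative h'' t) (at t)"
    and "\<And>t. \<bar>h'' t\<bar> < B"
  shows "(\<forall>y\<in>cube.
           (\<Sum>i\<in>UNIV. \<bar>dpart i (h \<circ> f) y - h' (f y) * dpart i f y\<bar>)
              \<le> B * L^2 * real CARD('n)
         \<and> sqrt (\<Sum>i\<in>UNIV. (dpart i (h \<circ> f) y - h' (f y) * dpart i f y)^2)
              \<le> B * L^2 * sqrt (real CARD('n)))
       \<and> (\<forall>x. (\<forall>i. \<bar>x $ i\<bar> \<le> 1) \<longrightarrow>
           (\<Sum>i\<in>UNIV. \<bar>hext (dpart i (h \<circ> f)) x - h' (hext f x) * hext (dpart i f) x\<bar>)
              \<le> 2 * B * L^2 * real CARD('n) powr (3/2))"
proof -
  note d1 = assms(2) and d2 = assms(3)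
  have bd: "\<And>t. \<bar>h'' t\<bar> \<le> B" using assms(4) by (simp add: less_imp_le)
  have B0: "0 \<le> B" using bd[of 0] by linarith
  have Lc: "\<And>y i. y \<in> cube \<Longrightarrow> \<bar>dpart i f y\<bar> \<le> L" using Lip_ge assms(1) by blast
  have L0: "0 \<le> L" using Lip_nonneg[of f] assms(1) by simp
  have BL0: "0 \<le> B * L^2" using B0 by simp
  define n where "n = real CARD('n)"
  have n1: "1 \<le> n" unfolding n_def by simp
  have pt: "\<And>y i. y \<in> cube \<Longrightarrow> \<bar>dpart i (h \<circ> f) y - h' (f y) * dpart i f y\<bar> \<le> B * L^2"
    by (rule pt1[OF d1 d2 bd _ Lc])
  have part1: "\<forall>y\<in>cube.
           (\<Sum>i\<in>UNIV. \<bar>dpart i (h \<circ> f) y - h' (f y) * dpart i f y\<bar>)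
              \<le> B * L^2 * real CARD('n)
         \<and> sqrt (\<Sum>i\<in>UNIV. (dpart i (h \<circ> f) y - h' (f y) * dpart i f y)^2)
              \<le> B * L^2 * sqrt (real CARD('n))"
  proof (intro ballI conjI)
    fix y :: "real^'n" assume y: "y \<in> cube"
    have "(\<Sum>i\<in>UNIV. \<bar>dpart i (h \<circ> f) y - h' (f y) * dpart i f y\<bar>) \<le> (\<Sum>i\<in>(UNIV::'n set). B * L^2)"
      by (rule sum_mono) (rule pt[OF y])
    then show "(\<Sum>i\<in>UNIV. \<bar>dpart i (h \<circ> f) y - h' (f y) * dpart i f y\<bar>) \<le> B * L^2 * real CARD('n)"
      by (simp add: mult.commute)
    have "(\<Sum>i\<in>UNIV. (dpart i (h \<circ> f) y - h' (f y) * dpart i f y)^2) \<le> (\<Sum>i\<in>(UNIV::'n set). (B * L^2)^2)"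
    proof (rule sum_mono)
      fix i
      have "\<bar>dpart i (h \<circ> f) y - h' (f y) * dpart i f y\<bar>^2 \<le> (B * L^2)^2"
        by (rule power_mono[OF pt[OF y] abs_ge_zero])
      then show "(dpart i (h \<circ> f) y - h' (f y) * dpart i f y)^2 \<le> (B * L^2)^2" by (simp only: power2_abs)
    qed
    also have "\<dots> = real CARD('n) * (B * L^2)^2" by simp
    finally have "sqrt (\<Sum>i\<in>UNIV. (dpart i (h \<circ> f) y - h' (f y) * dpart i f y)^2) \<le> sqrt (real CARD('n) * (B * L^2)^2)"
      by (rule real_sqrt_le_mono)
    also have "\<dots> = B * L^2 * sqrt (real CARD('n))"
      using BL0 by (simp add: real_sqrt_mult mult.commute)
    finally show "sqrt (\<Sum>i\<in>UNIV. (dpart i (h \<circ> f) y - h' (f y) * dpart i f y)^2) \<le> B * L^2 * sqrt (real CARD('n))" .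
  qed
  have part2: "\<forall>x. (\<forall>i. \<bar>x $ i\<bar> \<le> 1) \<longrightarrow>
           (\<Sum>i\<in>UNIV. \<bar>hext (dpart i (h \<circ> f)) x - h' (hext f x) * hext (dpart i f) x\<bar>)
              \<le> 2 * B * L^2 * real CARD('n) powr (3/2)"
  proof (intro allI impI)
    fix x :: "real^'n" assume x: "\<forall>i. \<bar>x $ i\<bar> \<le> 1"
    define c where "c = EE x f"
    have var: "EE x (\<lambda>y. (f y - c)^2) \<le> n * L^2"
    proof -
      have "EE x (\<lambda>y. (f y - Av x UNIV f y)^2) \<le> (\<Sum>k\<in>UNIV. EE x (\<lambda>y. (f y - A1 x k f y)^2))"
        by (rule ES[OF x])
      also have "\<dots> \<le> (\<Sum>k\<in>(UNIV::'n set). L^2)"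
        by (rule sum_mono) (rule coord_var[OF x Lc])
      finally show ?thesis by (simp add: EE_Av c_def n_def)
    qed
    define m where "m = EE x (\<lambda>y. \<bar>f y - c\<bar>)"
    have "0 \<le> EE x (\<lambda>y. (\<bar>f y - c\<bar> - m)^2)"
      using EE_mono[OF x, of "\<lambda>y. 0" "\<lambda>y. (\<bar>f y - c\<bar> - m)^2"] by (simp add: EE_const)
    also have "EE x (\<lambda>y. (\<bar>f y - c\<bar> - m)^2) = EE x (\<lambda>y. (f y - c)^2 + ((-2*m) * \<bar>f y - c\<bar> + m^2))"
      by (rule arg_cong[where f="EE x"], rule ext) (simp add: power2_eq_square algebra_simps)
    also have "\<dots> = EE x (\<lambda>y. (f y - c)^2) + ((-2*m) * m + m^2)"
      by (simp only: EE_add EE_cmult EE_const m_def[symmetric])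
    also have "\<dots> = EE x (\<lambda>y. (f y - c)^2) - m^2"
      by (simp add: power2_eq_square)
    finally have "m^2 \<le> n * L^2" using var by linarith
    then have "m \<le> sqrt (n * L^2)" by (rule real_le_rsqrt)
    then have m: "m \<le> sqrt n * L" using L0 by (simp add: real_sqrt_mult)
    have each: "\<bar>hext (dpart i (h \<circ> f)) x - h' (hext f x) * hext (dpart i f) x\<bar> \<le> B * L^2 + B * L * m" for i
    proof -
      have "hext (dpart i (h \<circ> f)) x - h' (hext f x) * hext (dpart i f) x
          = EE x (\<lambda>y. dpart i (h \<circ> f) y - h' c * dpart i f y)"
        by (simp add: hext_EE c_def EE_diff EE_cmult)
      also have "\<bar>\<dots>\<bar> \<le> EE x (\<lambda>y. B * L^2 + (B * L) * \<bar>f y - c\<bar>)"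
      proof (rule EE_abs_le[OF x])
        fix y :: "real^'n" assume y: "y \<in> cube"
        have l: "\<bar>h' (f y) - h' c\<bar> \<le> B * \<bar>f y - c\<bar>" by (rule lip1[OF d2 bd])
        have "\<bar>(h' (f y) - h' c) * dpart i f y\<bar> \<le> B * \<bar>f y - c\<bar> * L"
          unfolding abs_mult by (rule mult_mono[OF l Lc[OF y]]) (use B0 in auto)
        moreover have "dpart i (h \<circ> f) y - h' c * dpart i f y =
           (dpart i (h \<circ> f) y - h' (f y) * dpart i f y) + (h' (f y) - h' c) * dpart i f y"
          by (simp add: algebra_simps)
        ultimately show "\<bar>dpart i (h \<circ> f) y - h' c * dpart i f y\<bar> \<le> B * L^2 + (B * L) * \<bar>f y - c\<bar>"
          using pt[OF y, of i] by (simp add: algebra_simps)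
      qed
      also have "\<dots> = B * L^2 + B * L * m"
        by (simp add: EE_add EE_cmult EE_const m_def)
      finally show ?thesis .
    qed
    have "(\<Sum>i\<in>UNIV. \<bar>hext (dpart i (h \<circ> f)) x - h' (hext f x) * hext (dpart i f) x\<bar>)
        \<le> (\<Sum>i\<in>(UNIV::'n set). B * L^2 + B * L * m)"
      by (rule sum_mono) (rule each)
    also have "\<dots> = n * (B * L^2 + B * L * m)" by (simp add: n_def)
    also have "\<dots> \<le> n * (B * L^2 + B * L * (sqrt n * L))"
      using m B0 L0 n1 by (intro mult_left_mono add_left_mono) (auto intro: mult_left_mono)
    also have "\<dots> \<le> 2 * B * L^2 * (n * sqrt n)"
    proof -
      have "1 \<le> sqrt n" using n1 by simp
      then have "n * (B * L^2) \<le> n * sqrt n * (B * L^2)" using BL0 n1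
        by (intro mult_right_mono) auto
      then show ?thesis by (simp add: algebra_simps power2_eq_square)
    qed
    also have "n * sqrt n = real CARD('n) powr (3/2)"
    proof -
      have "real CARD('n) powr (3/2) = real CARD('n) powr (1 + 1/2)" by simp
      also have "\<dots> = n * sqrt n" using n1 unfolding n_def
        by (subst powr_add) (simp add: powr_half_sqrt)
      finally show ?thesis by simp
    qed
    finally show "(\<Sum>i\<in>UNIV. \<bar>hext (dpart i (h \<circ> f)) x - h' (hext f x) * hext (dpart i f) x\<bar>)
              \<le> 2 * B * L^2 * real CARD('n) powr (3/2)" by (simp only: mult.assoc)
  qed
  show ?thesis using part1 part2 by blast
qed

end
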